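(* For every $p>0$ there exists $C_p>0$ such that for every $x\in\mathbb Z_{\ge0}$ and all integers $0\le m\le k\le n$, $$\mathbf E^n_x\big[|S_k-S_m|^p\big]\le C_p\,|k-m|^{p/2}.$$
   Context: $\mathbf P^n_x$ is the uniform probability measure on the finite set of paths $(s_0,\dots,s_n)\in\mathbb Z_{\ge0}^{n+1}$ with $s_0=x$ and $|s_{i+1}-s_i|=1$ for all $i$ (simple symmetric random walk conditioned to stay non-negative up to time $n$), $S$ is its coordinate process and $\mathbf E^n_x$ the corresponding expectation. *)

theory Defs
  imports "HOL-Analysis.Analysis"
begin

text \<open>Paths (s_0,...,s_n) of a simple random walk staying in Z_{>=0}, started at x,
  represented as lists of naturals of length n+1.\<close>
definition nnpaths :: "nat \<Rightarrow> nat \<Rightarrow> nat list set" where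
  "nnpaths n x = {s. length s = Suc n \<and> s ! 0 = x \<and>
      (\<forall>i<n. \<bar>int (s ! Suc i) - int (s ! i)\<bar> = 1)}"

definition Ewalk :: "nat \<Rightarrow> nat \<Rightarrow> (nat list \<Rightarrow> real) \<Rightarrow> real" where
  "Ewalk n x F = (\<Sum>s\<in>nnpaths n x. F s) / real (card (nnpaths n x))"

end

theory Submission
  imports Defs
begin


lemma nnpaths_0: "nnpaths 0 x = {[x]}"
proof -
  have "s \<in> nnpaths 0 x \<longleftrightarrow> s = [x]" for s
    by (cases s) (auto simp: nnpaths_def)
  thus ?thesis by auto
qed

lemma Cons_mem_nnpaths:
  "y # t \<in> nnpaths (Suc n) x \<longleftrightarrow> y = x \<and> t \<in> nnpaths n (t ! 0) \<and> \<bar>int (t!0) - int x\<bar> = 1"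
proof
  assume H: "y # t \<in> nnpaths (Suc n) x"
  hence L: "length t = Suc n" and Y: "y = x"
    and St: "\<And>i. i < Suc n \<Longrightarrow> \<bar>int ((y#t) ! Suc i) - int ((y#t) ! i)\<bar> = 1"
    by (auto simp: nnpaths_def)
  have "\<bar>int (t!0) - int x\<bar> = 1" using St[of 0] Y by simp
  moreover have "t \<in> nnpaths n (t!0)"
  proof -
    have "\<bar>int (t ! Suc i) - int (t ! i)\<bar> = 1" if "i < n" for i
      using St[of "Suc i"] that by simp
    thus ?thesis unfolding nnpaths_def using L by simp
  qed
  ultimately show "y = x \<and> t \<in> nnpaths n (t ! 0) \<and> \<bar>int (t!0) - int x\<bar> = 1" using Y by simp
next
  assume H: "y = x \<and> t \<in> nnpaths n (t ! 0) \<and> \<bar>int (t!0) - int x\<bar> = 1"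
  hence L: "length t = Suc n" and St: "\<And>i. i < n \<Longrightarrow> \<bar>int (t ! Suc i) - int (t ! i)\<bar> = 1"
    by (auto simp: nnpaths_def)
  have "\<bar>int ((x#t) ! Suc i) - int ((x#t) ! i)\<bar> = 1" if "i < Suc n" for i
  proof (cases i)
    case 0 thus ?thesis using H by simp
  next
    case (Suc j) thus ?thesis using St[of j] that by simp
  qed
  thus "y # t \<in> nnpaths (Suc n) x" using H L by (auto simp: nnpaths_def)
qed

lemma nnpaths_Suc: "nnpaths (Suc n) x =
   Cons x ` (nnpaths n (Suc x) \<union> (if x > 0 then nnpaths n (x - 1) else {}))"
proof (intro set_eqI iffI)
  fix s assume s: "s \<in> nnpaths (Suc n) x"
  then obtain y t where st: "s = y # t" by (cases s) (auto simp: nnpaths_def)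
  with s have H: "y = x" "t \<in> nnpaths n (t ! 0)" "\<bar>int (t!0) - int x\<bar> = 1"
    using Cons_mem_nnpaths by blast+
  hence "t!0 = Suc x \<or> (x > 0 \<and> t!0 = x - 1)" by auto
  thus "s \<in> Cons x ` (nnpaths n (Suc x) \<union> (if x > 0 then nnpaths n (x - 1) else {}))"
    using H st by auto
next
  fix s assume "s \<in> Cons x ` (nnpaths n (Suc x) \<union> (if x > 0 then nnpaths n (x - 1) else {}))"
  then obtain t where st: "s = x # t" and t: "t \<in> nnpaths n (Suc x) \<or> (x > 0 \<and> t \<in> nnpaths n (x - 1))"
    by (auto split: if_splits)
  have t0: "t \<in> nnpaths n z \<Longrightarrow> t ! 0 = z" for z by (simp add: nnpaths_def)
  show "s \<in> nnpaths (Suc n) x" unfolding st Cons_mem_nnpaths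
    using t t0 by auto
qed

lemma finite_nnpaths: "finite (nnpaths n x)"
  by (induction n arbitrary: x) (auto simp: nnpaths_0 nnpaths_Suc)

lemma nnpaths_ne: "nnpaths n x \<noteq> {}"
  by (induction n arbitrary: x) (auto simp: nnpaths_0 nnpaths_Suc)

lemma card_nnpaths_pos: "card (nnpaths n x) > 0"
  using finite_nnpaths nnpaths_ne by (simp add: card_gt_0_iff)

lemma nnpaths_hd: "t \<in> nnpaths n z \<Longrightarrow> t ! 0 = z"
  by (simp add: nnpaths_def)

lemma sum_nnpaths_Suc:
  fixes G :: "nat list \<Rightarrow> real"
  shows "(\<Sum>s\<in>nnpaths (Suc n) x. G s) = (\<Sum>t\<in>nnpaths n (Suc x). G (x # t))
     + (if x > 0 then (\<Sum>t\<in>nnpaths n (x - 1). G (x # t)) else 0)"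
proof -
  have disj: "nnpaths n (Suc x) \<inter> (if x > 0 then nnpaths n (x - 1) else {}) = {}"
    using nnpaths_hd[of _ n "Suc x"] nnpaths_hd[of _ n "x - 1"] by force
  have "(\<Sum>s\<in>nnpaths (Suc n) x. G s) =
     (\<Sum>t\<in>nnpaths n (Suc x) \<union> (if x > 0 then nnpaths n (x - 1) else {}). G (x # t))"
    unfolding nnpaths_Suc by (subst sum.reindex) (auto simp: inj_on_def)
  also have "\<dots> = (\<Sum>t\<in>nnpaths n (Suc x). G (x # t)) +
      (\<Sum>t\<in>(if x > 0 then nnpaths n (x - 1) else {}). G (x # t))"
    by (rule sum.union_disjoint) (auto simp: finite_nnpaths disj)
  finally show ?thesis by simp
qed



definition hr :: "nat \<Rightarrow> nat \<Rightarrow> real" where "hr r z = real (card (nnpaths r z))"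

lemma hr_0: "hr 0 z = 1" by (simp add: hr_def nnpaths_0)

lemma hr_Suc: "hr (Suc r) z = hr r (Suc z) + (if z > 0 then hr r (z - 1) else 0)"
  using sum_nnpaths_Suc[of "\<lambda>_. 1" r z] by (simp add: hr_def)

lemma hr_pos: "hr r z > 0" using card_nnpaths_pos by (simp add: hr_def)

lemma hr_mono: "hr r z \<le> hr r (Suc z)"
proof (induction r arbitrary: z)
  case 0 thus ?case by (simp add: hr_0)
next
  case (Suc r)
  have "hr r (z - 1) \<le> hr r z" if "z > 0" using Suc.IH[of "z-1"] that by simp
  thus ?case using Suc.IH[of "Suc z"] Suc.IH[of z] hr_pos[of r z] hr_pos[of r 0]
    by (cases z) (simp_all add: hr_Suc)
qed

lemma hr_concave: "hr r z + hr r (Suc (Suc z)) \<le> 2 * hr r (Suc z) \<and> hr r 1 \<le> 2 * hr r 0"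
proof (induction r arbitrary: z)
  case 0 thus ?case by (simp add: hr_0)
next
  case (Suc r)
  have b: "hr (Suc r) 1 \<le> 2 * hr (Suc r) 0"
    using Suc.IH[of 0] by (simp add: hr_Suc)
  have c: "hr (Suc r) z + hr (Suc r) (Suc (Suc z)) \<le> 2 * hr (Suc r) (Suc z)"
  proof (cases z)
    case 0 thus ?thesis using Suc.IH[of 0] Suc.IH[of 1] by (simp add: hr_Suc numeral_2_eq_2)
  next
    case (Suc w)
    thus ?thesis using Suc.IH[of "Suc (Suc w)"] Suc.IH[of w] by (simp add: hr_Suc)
  qed
  show ?case using b c by simp
qed

lemma hr_ratio: "real (Suc w) * hr r (Suc w) \<le> real (Suc (Suc w)) * hr r w"
proof (induction w)
  case 0 thus ?case using hr_concave[of r 0] by simp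
next
  case (Suc w)
  have "hr r (Suc (Suc w)) \<le> 2 * hr r (Suc w) - hr r w" using hr_concave[of r w] by simp
  hence "real (Suc (Suc w)) * hr r (Suc (Suc w)) \<le> real (Suc (Suc w)) * (2 * hr r (Suc w) - hr r w)"
    by (intro mult_left_mono) auto
  thus ?case using Suc.IH by (simp add: algebra_simps)
qed

definition drift :: "nat \<Rightarrow> nat \<Rightarrow> real" where
  "drift r z = (\<Sum>t\<in>nnpaths r z. real (t ! 1) - real (t ! 0))"

lemma drift_Suc: "drift (Suc r) z = hr r (Suc z) - (if z > 0 then hr r (z - 1) else 0)"
proof -
  have "drift (Suc r) z = (\<Sum>t\<in>nnpaths r (Suc z). real (t!0) - real z)
     + (if z > 0 then (\<Sum>t\<in>nnpaths r (z - 1). real (t!0) - real z) else 0)"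
    unfolding drift_def by (subst sum_nnpaths_Suc) simp
  also have "(\<Sum>t\<in>nnpaths r (Suc z). real (t!0) - real z) = hr r (Suc z)"
    by (simp add: nnpaths_hd hr_def)
  also have "(if z > 0 then (\<Sum>t\<in>nnpaths r (z - 1). real (t!0) - real z) else 0)
     = - (if z > 0 then hr r (z - 1) else 0)"
    by (simp add: nnpaths_hd hr_def of_nat_diff)
  finally show ?thesis by simp
qed

lemma drift_nonneg: "drift (Suc r) z \<ge> 0"
proof -
  have "hr r (z - 1) \<le> hr r (Suc z)" if "z > 0"
    using hr_mono[of r "z - 1"] hr_mono[of r z] that by simp
  thus ?thesis using hr_pos[of r "Suc z"] by (cases z) (simp_all add: drift_Suc)
qed

lemma drift_le: "drift (Suc r) z * real (Suc z) \<le> hr (Suc r) z"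
proof (cases z)
  case 0 thus ?thesis by (simp add: drift_Suc hr_Suc)
next
  case (Suc w)
  have a: "real (Suc w) * hr r (Suc w) \<le> real (Suc (Suc w)) * hr r w" by (rule hr_ratio)
  have b: "real (Suc (Suc w)) * hr r (Suc (Suc w)) \<le> real (Suc (Suc (Suc w))) * hr r (Suc w)"
    by (rule hr_ratio)
  have "real (Suc w) * real (Suc (Suc w)) * hr r (Suc (Suc w))
      \<le> real (Suc w) * real (Suc (Suc (Suc w))) * hr r (Suc w)"
    using mult_left_mono[OF b, of "real (Suc w)"] by (simp add: mult.assoc)
  also have "\<dots> \<le> real (Suc (Suc (Suc w))) * real (Suc (Suc w)) * hr r w"
    using mult_left_mono[OF a, of "real (Suc (Suc (Suc w)))"] by (simp add: algebra_simps)
  finally have "real (Suc (Suc w)) * (real (Suc w) * hr r (Suc (Suc w)))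
      \<le> real (Suc (Suc w)) * (real (Suc (Suc (Suc w))) * hr r w)" by (simp add: algebra_simps)
  hence c: "real (Suc w) * hr r (Suc (Suc w)) \<le> real (Suc (Suc (Suc w))) * hr r w"
    by (rule mult_left_le_imp_le) simp
  show ?thesis using Suc c by (simp add: drift_Suc hr_Suc algebra_simps)
qed

lemma fiber:
  fixes F H :: "nat list \<Rightarrow> real"
  assumes "m \<le> n" "\<And>z. (\<Sum>t\<in>nnpaths (n - m) z. F t) \<le> (\<Sum>t\<in>nnpaths (n - m) z. H t)"
  shows "(\<Sum>s\<in>nnpaths n x. F (drop m s)) \<le> (\<Sum>s\<in>nnpaths n x. H (drop m s))"
  using assms
proof (induction m arbitrary: n x)
  case 0 thus ?case by simp
next
  case (Suc m)
  then obtain n' where n: "n = Suc n'" by (cases n) auto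
  have IH: "(\<Sum>s\<in>nnpaths n' y. F (drop m s)) \<le> (\<Sum>s\<in>nnpaths n' y. H (drop m s))" for y
    using Suc.IH[of n' y] Suc.prems n by simp
  show ?case unfolding n sum_nnpaths_Suc
    using IH[of "Suc x"] IH[of "x - 1"] by (auto intro: add_mono)
qed



lemma pow_le_even: fixes D :: real assumes "even m" "k \<le> m" shows "\<bar>D\<bar>^k \<le> D^m + 1"
proof (cases "\<bar>D\<bar> \<le> 1")
  case True
  hence "\<bar>D\<bar>^k \<le> 1" by (simp add: power_le_one)
  moreover have "D^m \<ge> 0" using assms(1) by (simp add: zero_le_even_power)
  ultimately show ?thesis by simp
next
  case False
  hence "\<bar>D\<bar>^k \<le> \<bar>D\<bar>^m" using assms(2) by (intro power_increasing) auto
  also have "\<dots> = D^m" using assms(1) by (simp add: power_even_abs)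
  finally show ?thesis by simp
qed

lemma pow_le_nonneg: fixes D :: real assumes "D \<ge> 0" "k \<le> Suc m" shows "D^k \<le> (D+1) * (D^m + 1)"
proof (cases "D \<le> 1")
  case True
  hence "D^k \<le> 1" using assms by (simp add: power_le_one)
  moreover have "1 * 1 \<le> (D+1) * (D^m + 1)" using assms by (intro mult_mono) auto
  ultimately show ?thesis by simp
next
  case False
  hence "D^k \<le> D^Suc m" using assms(2) by (intro power_increasing) auto
  also have "\<dots> = D * D^m" by simp
  also have "\<dots> \<le> (D+1) * (D^m + 1)" using assms by (intro mult_mono) auto
  finally show ?thesis .
qed

lemma choose_sum_le: "(\<Sum>k\<le>m. real (n choose k)) \<le> 2^n" if "m \<le> n"
proof -
  have "(\<Sum>k\<le>m. real (n choose k)) \<le> (\<Sum>k\<le>n. real (n choose k))"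
    using that by (intro sum_mono2) auto
  also have "\<dots> = 2^n" using choose_row_sum[of n] by (metis of_nat_numeral of_nat_power of_nat_sum)
  finally show ?thesis .
qed

lemma binom_pm: fixes D :: real
  shows "(D+1)^n = (\<Sum>k\<le>n. real (n choose k) * D^k)"
    and "(D-1)^n = (\<Sum>k\<le>n. real (n choose k) * D^k * (-1)^(n-k))"
  using binomial_ring[of D 1 n] binomial_ring[of D "-1" n] by simp_all

lemma poly_E: fixes D :: real assumes "even m"
  shows "(D+1)^(Suc (Suc m)) + (D-1)^(Suc (Suc m)) \<le> 2 * D^(Suc (Suc m)) + 2 * 2^(Suc (Suc m)) * (D^m + 1)"
proof -
  define n where "n = Suc (Suc m)"
  define T where "T k = real (n choose k) * D^k * (1 + (-1)^(n-k))" for k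
  have "(D+1)^n + (D-1)^n = (\<Sum>k\<le>n. T k)"
    unfolding binom_pm T_def by (simp add: sum.distrib[symmetric] algebra_simps)
  also have "\<dots> = (\<Sum>k\<le>m. T k) + T (Suc m) + T n" by (simp add: n_def)
  also have "T (Suc m) = 0" by (simp add: T_def n_def Suc_diff_le)
  also have "T n = 2 * D^n" by (simp add: T_def)
  also have "(\<Sum>k\<le>m. T k) \<le> (\<Sum>k\<le>m. 2 * real (n choose k) * (D^m + 1))"
  proof (rule sum_mono)
    fix k assume k: "k \<in> {..m}"
    have "T k \<le> \<bar>T k\<bar>" by simp
    also have "\<bar>T k\<bar> = real (n choose k) * \<bar>D\<bar>^k * \<bar>1 + (-1)^(n-k)\<bar>"
      by (simp add: T_def abs_mult power_abs)
    also have "\<bar>1 + (-1::real)^(n-k)\<bar> \<le> 2" by (cases "even (n-k)") auto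
    hence "real (n choose k) * \<bar>D\<bar>^k * \<bar>1 + (-1::real)^(n-k)\<bar> \<le> real (n choose k) * (D^m+1) * 2"
      using pow_le_even[OF assms, of k D] pow_le_even[OF assms, of 0 D] k by (intro mult_mono) auto
    finally show "T k \<le> 2 * real (n choose k) * (D^m + 1)" by simp
  qed
  also have "(\<Sum>k\<le>m. 2 * real (n choose k) * (D^m + 1)) = 2 * (D^m+1) * (\<Sum>k\<le>m. real (n choose k))"
    unfolding sum_distrib_left by (rule sum.cong) auto
  also have "\<dots> \<le> 2 * (D^m+1) * 2^n"
    using choose_sum_le[of m n] pow_le_even[OF assms, of 0 D] by (intro mult_left_mono) (auto simp: n_def)
  finally show ?thesis by (simp add: n_def algebra_simps)
qed

lemma poly_P: fixes D :: real assumes "D \<ge> 0"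
  shows "(D+1)^(Suc (Suc m)) - (D-1)^(Suc (Suc m)) \<le> 2 * 2^(Suc (Suc m)) * (D+1) * (D^m + 1)"
proof -
  define n where "n = Suc (Suc m)"
  define T where "T k = real (n choose k) * D^k * (1 - (-1)^(n-k))" for k
  have "(D+1)^n - (D-1)^n = (\<Sum>k\<le>n. T k)"
    unfolding binom_pm T_def by (simp add: sum_subtractf[symmetric] algebra_simps)
  also have "\<dots> = (\<Sum>k\<le>Suc m. T k) + T n" by (simp add: n_def)
  also have "T n = 0" by (simp add: T_def)
  also have "(\<Sum>k\<le>Suc m. T k) \<le> (\<Sum>k\<le>Suc m. 2 * real (n choose k) * ((D+1) * (D^m + 1)))"
  proof (rule sum_mono)
    fix k assume k: "k \<in> {..Suc m}"
    have "1 - (-1::real)^(n-k) \<le> 2" by (cases "even (n-k)") auto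
    moreover have "0 \<le> 1 - (-1::real)^(n-k)" by (cases "even (n-k)") auto
    ultimately have "real (n choose k) * D^k * (1 - (-1::real)^(n-k)) \<le> real (n choose k) * ((D+1) * (D^m + 1)) * 2"
      using pow_le_nonneg[OF assms, of k m] k assms by (intro mult_mono) auto
    thus "T k \<le> 2 * real (n choose k) * ((D+1) * (D^m + 1))" by (simp add: T_def)
  qed
  also have "(\<Sum>k\<le>Suc m. 2 * real (n choose k) * ((D+1) * (D^m + 1))) = 2 * ((D+1) * (D^m+1)) * (\<Sum>k\<le>Suc m. real (n choose k))"
    unfolding sum_distrib_left by (rule sum.cong) auto
  also have "\<dots> \<le> 2 * ((D+1) * (D^m+1)) * 2^n"
    using choose_sum_le[of "Suc m" n] assms by (intro mult_left_mono) (auto simp: n_def)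
  finally show ?thesis by (simp add: n_def algebra_simps)
qed

lemma poly_Pneg: fixes D :: real assumes "D \<le> 0" "even n"
  shows "(D+1)^n \<le> (D-1)^n"
proof -
  have "\<bar>D+1\<bar>^n \<le> \<bar>D-1\<bar>^n" using assms by (intro power_mono) auto
  thus ?thesis using assms by (metis power_even_abs)
qed



lemma nnpaths_len: "s \<in> nnpaths N y \<Longrightarrow> length s = Suc N"
  by (simp add: nnpaths_def)

lemma nnpaths_step: "s \<in> nnpaths N y \<Longrightarrow> i < N \<Longrightarrow>
    real (s ! Suc i) - real (s ! i) = 1 \<or> real (s ! Suc i) - real (s ! i) = -1"
  unfolding nnpaths_def by (auto simp: abs_if split: if_splits)

lemma card_as_sum: "(\<Sum>s\<in>nnpaths N y. (1::real)) = hr N y" by (simp add: hr_def)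

lemma moment_step:
  fixes y N m :: nat
  assumes "even m" "i < N"
  defines "n \<equiv> Suc (Suc m)"
  shows "(\<Sum>s\<in>nnpaths N y. (real (s ! Suc i) - real y)^n)
    \<le> (\<Sum>s\<in>nnpaths N y. (real (s ! i) - real y)^n)
       + 2 * 2^n * ((\<Sum>s\<in>nnpaths N y. (real (s ! i) - real y)^m) + hr N y)"
proof -
  define g where "g a = ((real a - real y + 1)^n - (real a - real y - 1)^n) / 2" for a :: nat
  define E where "E a = ((real a - real y + 1)^n + (real a - real y - 1)^n) / 2" for a :: nat
  have pt: "(real (s ! Suc i) - real y)^n = E (s!i) + g (s!i) * (real (s ! Suc i) - real (s ! i))"
    if "s \<in> nnpaths N y" for s
  proof -
    have "real (s ! Suc i) = real (s!i) + 1 \<or> real (s ! Suc i) = real (s!i) - 1"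
      using nnpaths_step[OF that assms(2)] by linarith
    thus ?thesis
    proof
      assume h: "real (s ! Suc i) = real (s!i) + 1"
      show ?thesis unfolding h E_def g_def by (simp add: algebra_simps add_divide_distrib[symmetric])
    next
      assume h: "real (s ! Suc i) = real (s!i) - 1"
      have aux: "(A::real) = (A - B)/2 + (A + B)/2" for A B by (simp add: field_simps)
      show ?thesis unfolding h E_def g_def by (simp add: algebra_simps aux[symmetric])
    qed
  qed
  define F where "F t = g (t!0) * (real (t!1) - real (t!0))" for t :: "nat list"
  define H where "H t = max (g (t!0)) 0 / real (Suc (t!0))" for t :: "nat list"
  have drop_nth: "drop i s ! 0 = s ! i" "drop i s ! 1 = s ! Suc i" if "s \<in> nnpaths N y" for s
    using nnpaths_len[OF that] assms(2) by simp_all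
  have fib: "(\<Sum>s\<in>nnpaths N y. F (drop i s)) \<le> (\<Sum>s\<in>nnpaths N y. H (drop i s))"
  proof (rule fiber)
    show "i \<le> N" using assms by simp
    fix z
    obtain r where r: "N - i = Suc r" using assms(2) by (metis Suc_diff_Suc)
    have sF: "(\<Sum>t\<in>nnpaths (N - i) z. F t) = g z * drift (Suc r) z"
      unfolding r F_def drift_def by (simp add: nnpaths_hd sum_distrib_left)
    have sH: "(\<Sum>t\<in>nnpaths (N - i) z. H t) = max (g z) 0 * hr (Suc r) z / real (Suc z)"
      unfolding r H_def hr_def by (simp add: nnpaths_hd)
    have "g z * drift (Suc r) z \<le> max (g z) 0 * drift (Suc r) z"
      using drift_nonneg[of r z] by (intro mult_right_mono) auto
    also have "\<dots> \<le> max (g z) 0 * (hr (Suc r) z / real (Suc z))"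
      using drift_le[of r z] by (intro mult_left_mono) (auto simp: field_simps)
    finally show "(\<Sum>t\<in>nnpaths (N - i) z. F t) \<le> (\<Sum>t\<in>nnpaths (N - i) z. H t)"
      unfolding sF sH by simp
  qed
  have "(\<Sum>s\<in>nnpaths N y. (real (s ! Suc i) - real y)^n)
      = (\<Sum>s\<in>nnpaths N y. E (s!i)) + (\<Sum>s\<in>nnpaths N y. F (drop i s))"
    unfolding sum.distrib[symmetric] by (rule sum.cong) (simp_all add: pt F_def drop_nth[simplified])
  also have "\<dots> \<le> (\<Sum>s\<in>nnpaths N y. E (s!i)) + (\<Sum>s\<in>nnpaths N y. H (drop i s))"
    using fib by simp
  also have "\<dots> = (\<Sum>s\<in>nnpaths N y. E (s!i) + H (drop i s))" by (simp add: sum.distrib)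
  also have "\<dots> \<le> (\<Sum>s\<in>nnpaths N y. (real (s ! i) - real y)^n + 2 * 2^n * ((real (s ! i) - real y)^m + 1))"
  proof (rule sum_mono)
    fix s assume s: "s \<in> nnpaths N y"
    define D where "D = real (s!i) - real y"
    have "E (s!i) \<le> D^n + 2^n * (D^m + 1)"
      using poly_E[OF assms(1), of D] unfolding E_def D_def n_def by simp
    moreover have "H (drop i s) \<le> 2^n * (D^m + 1)"
    proof (cases "D \<ge> 0")
      case True
      have "g (s!i) \<le> 2^n * (D+1) * (D^m+1)"
        using poly_P[OF True, of m] unfolding g_def D_def n_def by simp
      hence "max (g (s!i)) 0 \<le> 2^n * (D^m+1) * (D+1)"
        using True by (simp add: algebra_simps zero_le_even_power[OF assms(1)])
      also have "\<dots> \<le> 2^n * (D^m+1) * real (Suc (s!i))"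
        using True zero_le_even_power[OF assms(1), of D] unfolding D_def by (intro mult_left_mono) auto
      finally show ?thesis unfolding H_def drop_nth[OF s] by (simp add: divide_le_eq)
    next
      case False
      have "even n" using assms(1) by (simp add: n_def)
      hence "g (s!i) \<le> 0" using poly_Pneg[of D n] False unfolding g_def D_def by simp
      thus ?thesis unfolding H_def drop_nth[OF s]
        using zero_le_even_power[OF assms(1), of D] by simp
    qed
    ultimately show "E (s!i) + H (drop i s) \<le> (real (s ! i) - real y)^n + 2 * 2^n * ((real (s ! i) - real y)^m + 1)"
      unfolding D_def by simp
  qed
  also have "\<dots> = (\<Sum>s\<in>nnpaths N y. (real (s ! i) - real y)^n)
       + 2 * 2^n * ((\<Sum>s\<in>nnpaths N y. (real (s ! i) - real y)^m) + hr N y)"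
    by (simp add: sum.distrib sum_distrib_left card_as_sum[symmetric] algebra_simps)
  finally show ?thesis .
qed



lemma moment_bound:
  "\<exists>C\<ge>0. \<forall>N y j. j \<le> N \<longrightarrow>
     (\<Sum>s\<in>nnpaths N y. (real (s ! j) - real y)^(2*q)) \<le> C * real j ^ q * hr N y"
proof (induction q)
  case 0 thus ?case by (intro exI[of _ 1]) (simp add: hr_def)
next
  case (Suc q)
  then obtain C' where C': "C' \<ge> 0" "\<And>N y j. j \<le> N \<Longrightarrow>
     (\<Sum>s\<in>nnpaths N y. (real (s ! j) - real y)^(2*q)) \<le> C' * real j ^ q * hr N y" by blast
  define K :: real where "K = 2 * 2^(Suc (Suc (2*q)))"
  define C where "C = K * (C' + 1)"
  have C0: "C \<ge> 0" using C' by (simp add: C_def K_def)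
  have "(\<Sum>s\<in>nnpaths N y. (real (s ! j) - real y)^(2*Suc q)) \<le> C * real j ^ Suc q * hr N y"
    if "j \<le> N" for N y j
    using that
  proof (induction j)
    case 0 thus ?case by (simp add: nnpaths_hd)
  next
    case (Suc j)
    have hp: "hr N y > 0" by (rule hr_pos)
    have e: "2 * Suc q = Suc (Suc (2*q))" by simp
    have "(\<Sum>s\<in>nnpaths N y. (real (s ! Suc j) - real y)^(2*Suc q))
      \<le> (\<Sum>s\<in>nnpaths N y. (real (s ! j) - real y)^(2 * Suc q))
       + K * ((\<Sum>s\<in>nnpaths N y. (real (s ! j) - real y)^(2*q)) + hr N y)"
      unfolding e K_def using Suc.prems by (intro moment_step) auto
    also have "\<dots> \<le> C * real j ^ Suc q * hr N y + K * (C' * real j ^ q * hr N y + hr N y)"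
      using Suc.IH Suc.prems C'(2)[of j N y] by (intro add_mono mult_left_mono) (auto simp: K_def)
    also have "\<dots> \<le> C * real (Suc j) ^ Suc q * hr N y"
    proof -
      have a: "real j ^ q \<le> real (Suc j) ^ q" by (intro power_mono) auto
      have b: "1 \<le> real (Suc j) ^ q" by simp
      have "C' * real j ^ q + 1 \<le> (C' + 1) * real (Suc j) ^ q"
      proof -
        have b': "1 \<le> (1 + real j) ^ q" by simp
        have eq: "(C' + 1) * real (Suc j) ^ q = C' * real (Suc j) ^ q + real (Suc j) ^ q"
          by (simp add: algebra_simps)
        show ?thesis unfolding eq using mult_left_mono[OF a C'(1)] b by linarith
      qed
      hence "K * (C' * real j ^ q + 1) \<le> C * real (Suc j) ^ q"
        unfolding C_def by (simp add: K_def mult.assoc)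
      moreover have "C * real j ^ Suc q + C * real (Suc j) ^ q \<le> C * real (Suc j) ^ Suc q"
      proof -
        have "real j ^ Suc q = real j * real j ^ q" by simp
        also have "\<dots> \<le> real j * real (Suc j) ^ q" using a by (intro mult_left_mono) auto
        finally have "real j ^ Suc q + real (Suc j) ^ q \<le> real (Suc j) ^ Suc q"
          by (simp add: algebra_simps)
        thus ?thesis using mult_left_mono[OF _ C0] by (simp add: distrib_left[symmetric])
      qed
      ultimately have "C * real j ^ Suc q + K * (C' * real j ^ q + 1) \<le> C * real (Suc j) ^ Suc q"
        by linarith
      hence "(C * real j ^ Suc q + K * (C' * real j ^ q + 1)) * hr N y \<le> C * real (Suc j) ^ Suc q * hr N y"
        using hp by (intro mult_right_mono) auto
      thus ?thesis by (simp add: algebra_simps)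
    qed
    finally show ?case .
  qed
  thus ?case using C0 by blast
qed



lemma upow: fixes u p :: real assumes "u > 0" "p > 0" "real q \<ge> p/2"
  shows "u powr (p/2) \<le> 1 + u^q"
proof (cases "u \<le> 1")
  case True
  have "u powr (p/2) \<le> 1 powr (p/2)" using True assms by (intro powr_mono2) auto
  moreover have "u^q \<ge> 0" using assms by simp
  ultimately show ?thesis by simp
next
  case False
  have "u powr (p/2) \<le> u powr (real q)" using False assms by (intro powr_mono) auto
  also have "\<dots> = u^q" using assms by (simp add: powr_realpow)
  finally show ?thesis by simp
qed

lemma ptbound: fixes X p :: real assumes "j > 0" "p > 0" "real q \<ge> p/2"
  shows "\<bar>X\<bar> powr p \<le> real j powr (p/2) * (1 + X^(2*q) / real j ^ q)"
proof (cases "X = 0")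
  case True
  have "0 \<le> real j powr (p/2) * (1 + X^(2*q) / real j ^ q)"
    by (intro mult_nonneg_nonneg add_nonneg_nonneg) (auto simp: power_mult)
  thus ?thesis using True assms by simp
next
  case False
  define u where "u = X^2 / real j"
  have u0: "u > 0" using False assms by (simp add: u_def)
  have "\<bar>X\<bar> powr p = (\<bar>X\<bar> powr 2) powr (p/2)" unfolding powr_powr by simp
  also have "\<bar>X\<bar> powr 2 = real j * u" using False assms by (simp add: u_def powr_realpow)
  also have "(real j * u) powr (p/2) = real j powr (p/2) * u powr (p/2)"
    using u0 assms by (simp add: powr_mult)
  also have "\<dots> \<le> real j powr (p/2) * (1 + u^q)"
    using upow[OF u0 assms(2,3)] by (intro mult_left_mono) auto
  also have "u^q = X^(2*q) / real j ^ q" by (simp add: u_def power_divide power_mult)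
  finally show ?thesis .
qed

theorem corollaryA10:
  fixes p :: real
  assumes "p > 0"
  shows "\<exists>C>0. \<forall>x n k m :: nat. m \<le> k \<longrightarrow> k \<le> n \<longrightarrow>
           Ewalk n x (\<lambda>s. \<bar>real (s ! k) - real (s ! m)\<bar> powr p)
             \<le> C * real (k - m) powr (p / 2)"
proof -
  define q where "q = nat \<lceil>p\<rceil>"
  have q: "real q \<ge> p/2" using assms unfolding q_def by linarith
  obtain Cq where Cq: "Cq \<ge> 0" "\<And>N y j. j \<le> N \<Longrightarrow>
     (\<Sum>s\<in>nnpaths N y. (real (s ! j) - real y)^(2*q)) \<le> Cq * real j ^ q * hr N y"
    using moment_bound[of q] by blast
  have main: "Ewalk n x (\<lambda>s. \<bar>real (s ! k) - real (s ! m)\<bar> powr p)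
             \<le> (1 + Cq) * real (k - m) powr (p / 2)" if mk: "m \<le> k" "k \<le> n" for x n k m
  proof (cases "k = m")
    case True
    thus ?thesis using assms by (simp add: Ewalk_def)
  next
    case False
    define j where "j = k - m"
    have j0: "j > 0" using False mk by (simp add: j_def)
    have cp: "real (card (nnpaths n x)) > 0" using card_nnpaths_pos by simp
    have fib: "(\<Sum>s\<in>nnpaths n x. (\<lambda>t. (real (t!j) - real (t!0))^(2*q)) (drop m s))
       \<le> (\<Sum>s\<in>nnpaths n x. (\<lambda>t. Cq * real j ^ q) (drop m s))"
    proof (rule fiber)
      show "m \<le> n" using mk by simp
      fix z
      have "(\<Sum>t\<in>nnpaths (n - m) z. (real (t!j) - real (t!0))^(2*q))
          = (\<Sum>t\<in>nnpaths (n - m) z. (real (t!j) - real z)^(2*q))"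
        by (simp add: nnpaths_hd)
      also have "\<dots> \<le> Cq * real j ^ q * hr (n - m) z"
        using Cq(2)[of j "n - m" z] mk by (simp add: j_def)
      also have "\<dots> = (\<Sum>t\<in>nnpaths (n - m) z. Cq * real j ^ q)" by (simp add: hr_def)
      finally show "(\<Sum>t\<in>nnpaths (n - m) z. (real (t!j) - real (t!0))^(2*q))
          \<le> (\<Sum>t\<in>nnpaths (n - m) z. Cq * real j ^ q)" .
    qed
    have dr: "drop m s ! j = s ! k" "drop m s ! 0 = s ! m" if "s \<in> nnpaths n x" for s
      using nnpaths_len[OF that] mk by (simp_all add: j_def)
    have fib': "(\<Sum>s\<in>nnpaths n x. (real (s!k) - real (s!m))^(2*q))
         \<le> Cq * real j ^ q * real (card (nnpaths n x))"
      using fib by (simp add: dr mult.commute)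
    have "(\<Sum>s\<in>nnpaths n x. \<bar>real (s ! k) - real (s ! m)\<bar> powr p)
       \<le> (\<Sum>s\<in>nnpaths n x. real j powr (p/2) * (1 + (real (s!k) - real (s!m))^(2*q) / real j ^ q))"
      by (rule sum_mono) (rule ptbound[OF j0 assms q])
    also have "\<dots> = real j powr (p/2) * (real (card (nnpaths n x))
          + (\<Sum>s\<in>nnpaths n x. (real (s!k) - real (s!m))^(2*q)) / real j ^ q)"
      by (simp add: sum_distrib_left[symmetric] sum.distrib sum_divide_distrib)
    also have "\<dots> \<le> real j powr (p/2) * (real (card (nnpaths n x)) + Cq * real (card (nnpaths n x)))"
    proof -
      have "(\<Sum>s\<in>nnpaths n x. (real (s!k) - real (s!m))^(2*q)) / real j ^ q
          \<le> Cq * real (card (nnpaths n x))"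
        using fib' j0 by (simp add: divide_le_eq mult.commute mult.left_commute)
      thus ?thesis by (intro mult_left_mono) auto
    qed
    also have "\<dots> = (1 + Cq) * real j powr (p/2) * real (card (nnpaths n x))"
      by (simp add: algebra_simps)
    finally show ?thesis unfolding Ewalk_def using cp by (simp add: divide_le_eq j_def)
  qed
  show ?thesis using Cq(1) main by (intro exI[of _ "1 + Cq"]) auto
qed


end
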